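(* Let $\mathcal{S}$ be a finite set, $\Pi$ an irreducible stochastic matrix on $\mathcal{S}$, $\kappa(x,y):=\pi_{xy}-\mathbf{1}_{x=y}$, $\mathcal{K}=\Pi-\mathrm{I}$, and $Q=(q(y))$ the unique invariant distribution of $\Pi$. Assume detailed balance: $q(y)\kappa(y,z)=q(z)\kappa(z,y)$ for all $y,z$. Let $(P(t))_{t\ge0}$, $P(t)=(p(t,y))_{y\in\mathcal{S}}$, be the curve of time-marginal laws of the continuous-time Markov chain with generator $\mathcal{K}$ started from an initial distribution $P(0)$ with all entries positive (equivalently $\partial_t p(t,y)=\sum_z p(t,z)\kappa(z,y)$). Then, for every $t_0\in(0,\infty)$, the curve $(P(t))_{t\ge t_0}$ is of steepest descent locally at $t=t_0$ for the variance functional $V(P\,|\,Q):=\sum_y q(y)\big(p(y)/q(y)\big)^2-1$, relative to the metric $$\varrho(P_1,P_2):=\big\|\boldsymbol{\ell}_1-\boldsymbol{\ell}_2\big\|_{\mathbb{H}^{-1}(\mathcal{S},Q)},\qquad P_i=\boldsymbol{\ell}_iQ .$$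
   Context: $\mathcal{M}$ denotes the set of probability vectors on $\mathcal{S}$ with strictly positive entries; for $P\in\mathcal{M}$, $P=\boldsymbol{\ell}Q$ means $\ell(y)=p(y)/q(y)$. A smooth curve $(P(t))_{t_0\le t<\infty}\subset\mathcal{M}$ is of steepest descent locally at $t_0$ for a smooth functional $F:\mathcal{M}\to\mathbb{R}$ relative to a metric $\varrho$ on $\mathcal{M}$ if it minimizes, among all smooth curves $(\widetilde P(t))_{t_0\le t<\infty}\subset\mathcal{M}$ with $\widetilde P(t_0)=P(t_0)$, the quantity $\lim_{h\downarrow0}\big(F(\widetilde P(t_0+h))-F(P(t_0))\big)/\varrho(\widetilde P(t_0+h),P(t_0))$. Notation: $\nabla f(x,y):=f(y)-f(x)$; $\mathcal{Z}:=\{(x,y):\kappa(x,y)>0\}$, $c(x,y):=\frac12\kappa(x,y)q(x)$, $\|F\|^2_{\mathbb{L}^2(\mathcal{Z},C)}:=\sum_{(x,y)\in\mathcal{Z}}c(x,y)F(x,y)^2$; $\|f\|_{\mathbb{H}^{-1}(\mathcal{S},Q)}:=\|\nabla g\|_{\mathbb{L}^2(\mathcal{Z},C)}$ for any $g$ with $\mathcal{K}g=f$ if $f$ is in the range of $\mathcal{K}$, and $:=+\infty$ otherwise. *)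

theory Defs
  imports "HOL-Analysis.Analysis"
begin

definition stochastic_matrix :: "('a::finite \<Rightarrow> 'a \<Rightarrow> real) \<Rightarrow> bool" where
  "stochastic_matrix Pm \<longleftrightarrow> (\<forall>x y. Pm x y \<ge> 0) \<and> (\<forall>x. (\<Sum>y\<in>UNIV. Pm x y) = 1)"

definition irreducible_matrix :: "('a::finite \<Rightarrow> 'a \<Rightarrow> real) \<Rightarrow> bool" where
  "irreducible_matrix Pm \<longleftrightarrow> (\<forall>x y. (x, y) \<in> {(u, v). Pm u v > 0}\<^sup>*)"

definition invariant_distribution :: "('a::finite \<Rightarrow> 'a \<Rightarrow> real) \<Rightarrow> ('a \<Rightarrow> real) \<Rightarrow> bool" where
  "invariant_distribution Pm q \<longleftrightarrow> (\<forall>y. q y \<ge> 0) \<and> (\<Sum>y\<in>UNIV. q y) = 1 \<and>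
     (\<forall>y. (\<Sum>x\<in>UNIV. q x * Pm x y) = q y)"

definition kappa :: "('a \<Rightarrow> 'a \<Rightarrow> real) \<Rightarrow> 'a \<Rightarrow> 'a \<Rightarrow> real" where
  "kappa Pm x y = Pm x y - (if x = y then 1 else 0)"

definition gen :: "('a::finite \<Rightarrow> 'a \<Rightarrow> real) \<Rightarrow> ('a \<Rightarrow> real) \<Rightarrow> 'a \<Rightarrow> real" where
  "gen Pm g x = (\<Sum>y\<in>UNIV. kappa Pm x y * g y)"

definition in_M :: "('a::finite \<Rightarrow> real) \<Rightarrow> bool" where
  "in_M p \<longleftrightarrow> (\<forall>y. p y > 0) \<and> (\<Sum>y\<in>UNIV. p y) = 1"

text \<open>Squared L2(Z,C)-norm of the discrete gradient of g, c(x,y) = kappa(x,y) q(x) / 2,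
  Z = {(x,y). kappa(x,y) > 0}.\<close>
definition grad_L2_norm :: "('a::finite \<Rightarrow> 'a \<Rightarrow> real) \<Rightarrow> ('a \<Rightarrow> real) \<Rightarrow> ('a \<Rightarrow> real) \<Rightarrow> real" where
  "grad_L2_norm Pm q g =
     sqrt (\<Sum>(x, y)\<in>{(x, y). kappa Pm x y > 0}. (kappa Pm x y * q x / 2) * (g y - g x)\<^sup>2)"

definition Hminus1_norm :: "('a::finite \<Rightarrow> 'a \<Rightarrow> real) \<Rightarrow> ('a \<Rightarrow> real) \<Rightarrow> ('a \<Rightarrow> real) \<Rightarrow> ereal" where
  "Hminus1_norm Pm q f =
     (if \<exists>g. gen Pm g = f then ereal (grad_L2_norm Pm q (SOME g. gen Pm g = f)) else \<infinity>)"

text \<open>The metric rho(P1,P2) = || l1 - l2 ||_{H^{-1}}, where l_i = p_i / q (likelihood ratios).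
  Under the hypotheses of the theorem this is always finite; it is converted to a real.\<close>
definition rho :: "('a::finite \<Rightarrow> 'a \<Rightarrow> real) \<Rightarrow> ('a \<Rightarrow> real) \<Rightarrow> ('a \<Rightarrow> real) \<Rightarrow> ('a \<Rightarrow> real) \<Rightarrow> real" where
  "rho Pm q P1 P2 = real_of_ereal (Hminus1_norm Pm q (\<lambda>y. P1 y / q y - P2 y / q y))"

definition variance_fun :: "('a::finite \<Rightarrow> real) \<Rightarrow> ('a \<Rightarrow> real) \<Rightarrow> real" where
  "variance_fun q p = (\<Sum>y\<in>UNIV. q y * (p y / q y)\<^sup>2) - 1"

definition smooth_curve_M :: "real \<Rightarrow> (real \<Rightarrow> 'a::finite \<Rightarrow> real) \<Rightarrow> bool" where
  "smooth_curve_M t0 C \<longleftrightarrow> (\<forall>t\<ge>t0. in_M (C t)) \<and>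
     (\<forall>y. \<exists>D :: nat \<Rightarrow> real \<Rightarrow> real. D 0 = (\<lambda>t. C t y) \<and>
        (\<forall>n t. t \<ge> t0 \<longrightarrow> (D n has_real_derivative D (Suc n) t) (at t within {t0..})))"

definition descent_ratio ::
  "(('a \<Rightarrow> real) \<Rightarrow> real) \<Rightarrow> (('a \<Rightarrow> real) \<Rightarrow> ('a \<Rightarrow> real) \<Rightarrow> real) \<Rightarrow> (real \<Rightarrow> 'a \<Rightarrow> real)
    \<Rightarrow> (real \<Rightarrow> 'a \<Rightarrow> real) \<Rightarrow> real \<Rightarrow> real \<Rightarrow> real" where
  "descent_ratio F \<rho> P C t0 h = (F (C (t0 + h)) - F (P t0)) / \<rho> (C (t0 + h)) (P t0)"

definition steepest_descent_at ::
  "(('a::finite \<Rightarrow> real) \<Rightarrow> real) \<Rightarrow> (('a \<Rightarrow> real) \<Rightarrow> ('a \<Rightarrow> real) \<Rightarrow> real) \<Rightarrow> (real \<Rightarrow> 'a \<Rightarrow> real)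
    \<Rightarrow> real \<Rightarrow> bool" where
  "steepest_descent_at F \<rho> P t0 \<longleftrightarrow> smooth_curve_M t0 P \<and>
     (\<exists>L. (descent_ratio F \<rho> P P t0 \<longlongrightarrow> L) (at_right 0) \<and>
        (\<forall>C. smooth_curve_M t0 C \<and> C t0 = P t0 \<longrightarrow>
           (\<forall>L'. (descent_ratio F \<rho> P C t0 \<longlongrightarrow> L') (at_right 0) \<longrightarrow> L \<le> L')))"

end

theory Submission imports Defs begin


definition ipq :: "('a::finite \<Rightarrow> real) \<Rightarrow> ('a \<Rightarrow> real) \<Rightarrow> ('a \<Rightarrow> real) \<Rightarrow> real" where
  "ipq q a b = (\<Sum>x\<in>UNIV. q x * a x * b x)"

definition Bf :: "('a::finite \<Rightarrow> 'a \<Rightarrow> real) \<Rightarrow> ('a \<Rightarrow> real) \<Rightarrow> ('a \<Rightarrow> real) \<Rightarrow> ('a \<Rightarrow> real) \<Rightarrow> real" where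
  "Bf Pm q a b = (\<Sum>x\<in>UNIV. \<Sum>y\<in>UNIV. kappa Pm x y * q x / 2 * ((a y - a x) * (b y - b x)))"

lemma row0: "stochastic_matrix Pm \<Longrightarrow> (\<Sum>y\<in>UNIV. kappa Pm x y) = 0"
  by (simp add: stochastic_matrix_def kappa_def sum_subtractf)

lemma col0: "invariant_distribution Pm q \<Longrightarrow> (\<Sum>x\<in>UNIV. q x * kappa Pm x y) = 0"
proof -
  assume inv: "invariant_distribution Pm q"
  have "(\<Sum>x\<in>UNIV. q x * kappa Pm x y) = (\<Sum>x\<in>UNIV. q x * Pm x y) - (\<Sum>x\<in>UNIV. (if x = y then q x else 0))"
    unfolding kappa_def sum_subtractf[symmetric] by (intro sum.cong refl) (simp add: algebra_simps)
  also have "\<dots> = 0" using inv by (simp add: invariant_distribution_def)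
  finally show ?thesis .
qed

lemma Bf_sym: "Bf Pm q a b = Bf Pm q b a"
  unfolding Bf_def by (simp add: mult.commute)

lemma Bf_ip:
  assumes st: "stochastic_matrix Pm" and inv: "invariant_distribution Pm q"
    and bal: "\<forall>y z. q y * kappa Pm y z = q z * kappa Pm z y"
  shows "Bf Pm q a b = - ipq q a (gen Pm b)"
proof -
  have bx: "\<And>x y. q x * kappa Pm x y = q y * kappa Pm y x" using bal by blast
  have e: "kappa Pm x y * q x / 2 * ((a y - a x) * (b y - b x)) =
     (q x * kappa Pm x y * (a y * b y) + q x * kappa Pm x y * (a x * b x)
      - q x * kappa Pm x y * a y * b x - q x * kappa Pm x y * a x * b y) / 2" for x y
    by (simp add: divide_simps) (simp add: algebra_simps)
  have t1: "(\<Sum>x\<in>UNIV. \<Sum>y\<in>UNIV. q x * kappa Pm x y * (a y * b y)) = 0"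
  proof -
    have "(\<Sum>x\<in>UNIV. \<Sum>y\<in>UNIV. q x * kappa Pm x y * (a y * b y))
       = (\<Sum>y\<in>UNIV. \<Sum>x\<in>UNIV. q x * kappa Pm x y * (a y * b y))" by (rule sum.swap)
    also have "\<dots> = (\<Sum>y\<in>UNIV. (\<Sum>x\<in>UNIV. q x * kappa Pm x y) * (a y * b y))"
      by (simp only: sum_distrib_right)
    also have "\<dots> = 0" by (simp only: col0[OF inv]) simp
    finally show ?thesis .
  qed
  have t4: "(\<Sum>x\<in>UNIV. \<Sum>y\<in>UNIV. q x * kappa Pm x y * (a x * b x)) = 0"
  proof -
    have "(\<Sum>x\<in>UNIV. \<Sum>y\<in>UNIV. q x * kappa Pm x y * (a x * b x))
       = (\<Sum>x\<in>UNIV. q x * (\<Sum>y\<in>UNIV. kappa Pm x y) * (a x * b x))"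
      by (simp only: sum_distrib_right sum_distrib_left)
    also have "\<dots> = 0" by (simp only: row0[OF st]) simp
    finally show ?thesis .
  qed
  have t3: "(\<Sum>x\<in>UNIV. \<Sum>y\<in>UNIV. q x * kappa Pm x y * a x * b y) = ipq q a (gen Pm b)"
    unfolding ipq_def gen_def sum_distrib_left
    by (intro sum.cong refl) (simp add: algebra_simps)
  have t2: "(\<Sum>x\<in>UNIV. \<Sum>y\<in>UNIV. q x * kappa Pm x y * a y * b x) = ipq q a (gen Pm b)"
  proof -
    have "(\<Sum>x\<in>UNIV. \<Sum>y\<in>UNIV. q x * kappa Pm x y * a y * b x)
        = (\<Sum>x\<in>UNIV. \<Sum>y\<in>UNIV. q y * kappa Pm y x * a y * b x)"
      by (intro sum.cong refl) (simp only: bx)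
    also have "\<dots> = (\<Sum>y\<in>UNIV. \<Sum>x\<in>UNIV. q y * kappa Pm y x * a y * b x)"
      by (rule sum.swap)
    also have "\<dots> = ipq q a (gen Pm b)"
      unfolding ipq_def gen_def sum_distrib_left
      by (intro sum.cong refl) (simp add: algebra_simps)
    finally show ?thesis .
  qed
  have "Bf Pm q a b = (\<Sum>x\<in>UNIV. \<Sum>y\<in>UNIV. (q x * kappa Pm x y * (a y * b y) + q x * kappa Pm x y * (a x * b x)
      - q x * kappa Pm x y * a y * b x - q x * kappa Pm x y * a x * b y)) / 2"
    unfolding Bf_def e by (simp only: sum_divide_distrib)
  also have "\<dots> = ((\<Sum>x\<in>UNIV. \<Sum>y\<in>UNIV. q x * kappa Pm x y * (a y * b y))
     + (\<Sum>x\<in>UNIV. \<Sum>y\<in>UNIV. q x * kappa Pm x y * (a x * b x))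
     - (\<Sum>x\<in>UNIV. \<Sum>y\<in>UNIV. q x * kappa Pm x y * a y * b x)
     - (\<Sum>x\<in>UNIV. \<Sum>y\<in>UNIV. q x * kappa Pm x y * a x * b y)) / 2"
    by (simp only: sum.distrib sum_subtractf)
  finally show ?thesis using t1 t2 t3 t4 by simp
qed

lemma Bf_nonneg:
  assumes st: "stochastic_matrix Pm" and inv: "invariant_distribution Pm q"
  shows "Bf Pm q a a \<ge> 0"
  unfolding Bf_def
proof (intro sum_nonneg)
  fix x y
  show "0 \<le> kappa Pm x y * q x / 2 * ((a y - a x) * (a y - a x))"
  proof (cases "x = y")
    case False
    then have "kappa Pm x y \<ge> 0" using st by (simp add: kappa_def stochastic_matrix_def)
    moreover have "q x \<ge> 0" using inv by (simp add: invariant_distribution_def)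
    ultimately show ?thesis by simp
  qed simp
qed

lemma Bf_add1: "Bf Pm q (\<lambda>z. a z + c z) b = Bf Pm q a b + Bf Pm q c b"
proof -
  have h: "\<And>x y. kappa Pm x y * q x / 2 * ((a y + c y - (a x + c x)) * (b y - b x)) =
     kappa Pm x y * q x / 2 * ((a y - a x) * (b y - b x)) + kappa Pm x y * q x / 2 * ((c y - c x) * (b y - b x))"
    by (simp add: field_simps)
  show ?thesis unfolding Bf_def by (simp only: h sum.distrib)
qed
lemma Bf_diff1: "Bf Pm q (\<lambda>z. a z - c z) b = Bf Pm q a b - Bf Pm q c b"
proof -
  have h: "\<And>x y. kappa Pm x y * q x / 2 * ((a y - c y - (a x - c x)) * (b y - b x)) =
     kappa Pm x y * q x / 2 * ((a y - a x) * (b y - b x)) - kappa Pm x y * q x / 2 * ((c y - c x) * (b y - b x))"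
    by (simp add: field_simps)
  show ?thesis unfolding Bf_def by (simp only: h sum_subtractf)
qed
lemma Bf_scale1: "Bf Pm q (\<lambda>z. t * a z) b = t * Bf Pm q a b"
proof -
  have h: "\<And>x y. kappa Pm x y * q x / 2 * ((t * a y - t * a x) * (b y - b x)) =
     t * (kappa Pm x y * q x / 2 * ((a y - a x) * (b y - b x)))"
    by (simp add: field_simps)
  then show ?thesis unfolding Bf_def sum_distrib_left by presburger
qed
lemma Bf_scale2: "Bf Pm q a (\<lambda>z. t * b z) = t * Bf Pm q a b"
  by (metis Bf_scale1 Bf_sym)

lemma Bf_CS:
  assumes st: "stochastic_matrix Pm" and inv: "invariant_distribution Pm q"
  shows "\<bar>Bf Pm q a b\<bar> \<le> sqrt (Bf Pm q a a) * sqrt (Bf Pm q b b)"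
proof -
  let ?B = "Bf Pm q"
  have quad: "?B a a + 2 * t * ?B a b + t\<^sup>2 * ?B b b \<ge> 0" for t
  proof -
    have "?B (\<lambda>z. a z + t * b z) (\<lambda>z. a z + t * b z) \<ge> 0" by (rule Bf_nonneg[OF st inv])
    also have "?B (\<lambda>z. a z + t * b z) (\<lambda>z. a z + t * b z) = ?B a a + 2 * t * ?B a b + t\<^sup>2 * ?B b b"
    proof -
      have "?B (\<lambda>z. a z + t * b z) (\<lambda>z. a z + t * b z) = ?B a (\<lambda>z. a z + t * b z) + t * ?B b (\<lambda>z. a z + t * b z)"
        by (simp add: Bf_add1 Bf_scale1)
      also have "?B a (\<lambda>z. a z + t * b z) = ?B a a + t * ?B a b"
        by (subst Bf_sym, simp add: Bf_add1 Bf_scale1 Bf_sym[of _ _ b a])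
      also have "?B b (\<lambda>z. a z + t * b z) = ?B a b + t * ?B b b"
        by (subst Bf_sym, simp add: Bf_add1 Bf_scale1)
      finally show ?thesis by (simp add: power2_eq_square algebra_simps)
    qed
    finally show ?thesis .
  qed
  have sq: "(?B a b)\<^sup>2 \<le> ?B a a * ?B b b"
  proof (cases "?B b b = 0")
    case True
    show ?thesis
    proof (rule ccontr)
      assume "\<not> ?thesis"
      then have nz: "?B a b \<noteq> 0" using True by auto
      have "?B a a + 2 * (- (?B a a + 1) / (2 * ?B a b)) * ?B a b \<ge> 0" using quad[of "- (?B a a + 1) / (2 * ?B a b)"] True by simp
      with nz show False by (simp add: field_simps)
    qed
  next
    case False
    then have pos: "?B b b > 0" using Bf_nonneg[OF st inv, of b] by simp
    have "0 \<le> ?B a a + 2 * (- ?B a b / ?B b b) * ?B a b + (- ?B a b / ?B b b)\<^sup>2 * ?B b b" by (rule quad)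
    also have "\<dots> = ?B a a - (?B a b)\<^sup>2 / ?B b b" using pos by (simp add: power2_eq_square field_simps)
    finally show ?thesis using pos by (simp add: field_simps)
  qed
  have "\<bar>?B a b\<bar> = sqrt ((?B a b)\<^sup>2)" by simp
  also have "\<dots> \<le> sqrt (?B a a * ?B b b)" using sq by (rule real_sqrt_le_mono)
  also have "\<dots> = sqrt (?B a a) * sqrt (?B b b)" by (simp add: real_sqrt_mult)
  finally show ?thesis .
qed


lemma grad_eq:
  assumes st: "stochastic_matrix Pm"
  shows "grad_L2_norm Pm q g = sqrt (Bf Pm q g g)"
proof -
  have "(\<Sum>(x, y)\<in>{(x, y). kappa Pm x y > 0}. (kappa Pm x y * q x / 2) * (g y - g x)\<^sup>2)
      = (\<Sum>(x, y)\<in>UNIV. (kappa Pm x y * q x / 2) * (g y - g x)\<^sup>2)"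
  proof (rule sum.mono_neutral_left)
    show "\<forall>i\<in>UNIV - {(x, y). 0 < kappa Pm x y}. (case i of (x, y) \<Rightarrow> kappa Pm x y * q x / 2 * (g y - g x)\<^sup>2) = 0"
    proof
      fix i assume "i \<in> UNIV - {(x, y). 0 < kappa Pm x y}"
      then obtain x y where i: "i = (x, y)" and k: "\<not> kappa Pm x y > 0" by auto
      show "(case i of (x, y) \<Rightarrow> kappa Pm x y * q x / 2 * (g y - g x)\<^sup>2) = 0"
      proof (cases "x = y")
        case False
        then have "kappa Pm x y = 0" using k st by (simp add: kappa_def stochastic_matrix_def) (meson order.antisym not_less)
        then show ?thesis using i by simp
      qed (simp add: i)
    qed
  qed auto
  also have "\<dots> = (\<Sum>x\<in>UNIV. \<Sum>y\<in>UNIV. (kappa Pm x y * q x / 2) * (g y - g x)\<^sup>2)"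
    by (simp add: sum.cartesian_product UNIV_Times_UNIV[symmetric] del: UNIV_Times_UNIV)
  also have "\<dots> = Bf Pm q g g" unfolding Bf_def power2_eq_square ..
  finally show ?thesis unfolding grad_L2_norm_def by simp
qed

lemma gen_alt:
  assumes st: "stochastic_matrix Pm"
  shows "gen Pm g x = (\<Sum>y\<in>UNIV. Pm x y * (g y - g x))"
proof -
  have "gen Pm g x = (\<Sum>y\<in>UNIV. Pm x y * g y) - (\<Sum>y\<in>UNIV. (if x = y then g y else 0))"
    unfolding gen_def kappa_def sum_subtractf[symmetric] by (intro sum.cong refl) (simp add: algebra_simps)
  also have "\<dots> = (\<Sum>y\<in>UNIV. Pm x y * g y) - (\<Sum>y\<in>UNIV. Pm x y) * g x"
    using st by (simp add: stochastic_matrix_def)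
  also have "\<dots> = (\<Sum>y\<in>UNIV. Pm x y * (g y - g x))"
    by (simp add: right_diff_distrib sum_subtractf sum_distrib_right)
  finally show ?thesis .
qed

lemma gen_sq:
  assumes st: "stochastic_matrix Pm" and inv: "invariant_distribution Pm q"
  shows "ipq q (gen Pm g) (gen Pm g) \<le> 2 * Bf Pm q g g"
proof -
  have pw: "(gen Pm g x)\<^sup>2 \<le> (\<Sum>y\<in>UNIV. Pm x y * (g y - g x)\<^sup>2)" for x
  proof -
    have nn: "\<And>y. Pm x y \<ge> 0" using st by (simp add: stochastic_matrix_def)
    have "(gen Pm g x)\<^sup>2 = (\<Sum>y\<in>UNIV. sqrt (Pm x y) * (sqrt (Pm x y) * (g y - g x)))\<^sup>2"
      unfolding gen_alt[OF st] using nn by (simp add: mult.assoc[symmetric])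
    also have "\<dots> \<le> (\<Sum>y\<in>UNIV. (sqrt (Pm x y))\<^sup>2) * (\<Sum>y\<in>UNIV. (sqrt (Pm x y) * (g y - g x))\<^sup>2)"
      by (rule Cauchy_Schwarz_ineq_sum)
    also have "\<dots> = (\<Sum>y\<in>UNIV. Pm x y * (g y - g x)\<^sup>2)"
      using nn st by (simp add: stochastic_matrix_def power_mult_distrib)
    finally show ?thesis .
  qed
  have qn: "\<And>x. q x \<ge> 0" using inv by (simp add: invariant_distribution_def)
  have "ipq q (gen Pm g) (gen Pm g) = (\<Sum>x\<in>UNIV. q x * (gen Pm g x)\<^sup>2)"
    unfolding ipq_def by (simp add: power2_eq_square mult.assoc)
  also have "\<dots> \<le> (\<Sum>x\<in>UNIV. q x * (\<Sum>y\<in>UNIV. Pm x y * (g y - g x)\<^sup>2))"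
    by (intro sum_mono mult_left_mono pw qn)
  also have "\<dots> = 2 * Bf Pm q g g"
    unfolding Bf_def sum_distrib_left
    by (intro sum.cong refl) (auto simp: kappa_def power2_eq_square)
  finally show ?thesis .
qed

lemma var_diff:
  assumes qp: "\<And>y. q y > 0"
  shows "variance_fun q c - variance_fun q p =
    2 * ipq q (\<lambda>y. p y / q y) (\<lambda>y. c y / q y - p y / q y) + ipq q (\<lambda>y. c y / q y - p y / q y) (\<lambda>y. c y / q y - p y / q y)"
proof -
  have pw: "q y * (c y / q y)\<^sup>2 - q y * (p y / q y)\<^sup>2 = 2 * (q y * (p y / q y) * (c y / q y - p y / q y))
     + q y * (c y / q y - p y / q y) * (c y / q y - p y / q y)" for y
    using qp[of y] by (simp add: field_simps power2_eq_square)
  show ?thesis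
    unfolding variance_fun_def ipq_def
    by (simp add: sum_subtractf[symmetric] pw sum.distrib sum_distrib_left)
qed

lemma ratio_lower:
  assumes st: "stochastic_matrix Pm" and inv: "invariant_distribution Pm q"
    and bal: "\<forall>y z. q y * kappa Pm y z = q z * kappa Pm z y"
    and qpos: "\<And>y. q y > 0"
  shows "(variance_fun q c - variance_fun q p) / rho Pm q c p \<ge> - 2 * sqrt (Bf Pm q (\<lambda>y. p y / q y) (\<lambda>y. p y / q y))"
proof -
  define f where "f = (\<lambda>y. c y / q y - p y / q y)"
  define l where "l = (\<lambda>y. p y / q y)"
  have s0: "sqrt (Bf Pm q l l) \<ge> 0" using Bf_nonneg[OF st inv, of l] by simp
  show ?thesis
  proof (cases "\<exists>g. gen Pm g = f")
    case False
    then have "rho Pm q c p = 0" unfolding rho_def Hminus1_norm_def f_def by simp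
    then show ?thesis using s0 l_def by simp
  next
    case True
    define g where "g = (SOME g. gen Pm g = f)"
    have gg: "gen Pm g = f" unfolding g_def using True by (rule someI_ex)
    have rho: "rho Pm q c p = sqrt (Bf Pm q g g)"
      unfolding rho_def Hminus1_norm_def using True by (simp add: f_def[symmetric] g_def[symmetric] grad_eq[OF st])
    show ?thesis
    proof (cases "sqrt (Bf Pm q g g) = 0")
      case True then show ?thesis using rho s0 l_def by simp
    next
      case False
      then have pos: "sqrt (Bf Pm q g g) > 0" using Bf_nonneg[OF st inv, of g] by simp
      have ff: "ipq q f f \<ge> 0" unfolding ipq_def using qpos by (intro sum_nonneg) (simp add: mult.assoc less_imp_le)
      have "variance_fun q c - variance_fun q p = 2 * ipq q l f + ipq q f f"
        using var_diff[OF qpos] unfolding f_def l_def .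
      also have "ipq q l f = - Bf Pm q l g" using Bf_ip[OF st inv bal, of l g] gg by simp
      finally have "variance_fun q c - variance_fun q p \<ge> - 2 * Bf Pm q l g" using ff by simp
      moreover have "Bf Pm q l g \<le> sqrt (Bf Pm q l l) * sqrt (Bf Pm q g g)"
        using Bf_CS[OF st inv, of l g] by simp
      ultimately have "variance_fun q c - variance_fun q p \<ge> - 2 * sqrt (Bf Pm q l l) * sqrt (Bf Pm q g g)"
        by simp
      then show ?thesis using pos rho l_def by (simp add: pos_le_divide_eq)
    qed
  qed
qed


lemma ratio_upper:
  assumes st: "stochastic_matrix Pm" and inv: "invariant_distribution Pm q"
    and bal: "\<forall>y z. q y * kappa Pm y z = q z * kappa Pm z y"
    and qpos: "\<And>y. q y > 0" and hpos: "h > 0"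
    and gu: "gen Pm (\<lambda>z. h * u z) = (\<lambda>y. c y / q y - p y / q y)"
  shows "(variance_fun q c - variance_fun q p) / rho Pm q c p \<le>
     - 2 * sqrt (Bf Pm q u u) + 2 * sqrt (Bf Pm q (\<lambda>z. p z / q z - u z) (\<lambda>z. p z / q z - u z))
     + 2 * h * sqrt (Bf Pm q u u)"
proof -
  define f where "f = (\<lambda>y. c y / q y - p y / q y)"
  define l where "l = (\<lambda>y. p y / q y)"
  define g where "g = (\<lambda>z. h * u z)"
  have gf: "gen Pm g = f" using gu unfolding g_def f_def .
  then have ex: "\<exists>g. gen Pm g = f" by blast
  define g' where "g' = (SOME g. gen Pm g = f)"
  have gg': "gen Pm g' = f" unfolding g'_def using ex by (rule someI_ex)
  have "Bf Pm q g' g' = Bf Pm q g' g"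
    using Bf_ip[OF st inv bal, of g' g'] Bf_ip[OF st inv bal, of g' g] gg' gf by simp
  also have "\<dots> = Bf Pm q g g' " by (rule Bf_sym)
  also have "\<dots> = Bf Pm q g g"
    using Bf_ip[OF st inv bal, of g g'] Bf_ip[OF st inv bal, of g g] gg' gf by simp
  also have "\<dots> = h\<^sup>2 * Bf Pm q u u"
    unfolding g_def by (simp add: Bf_scale1 Bf_scale2 power2_eq_square)
  finally have Bg': "Bf Pm q g' g' = h\<^sup>2 * Bf Pm q u u" .
  have rho: "rho Pm q c p = h * sqrt (Bf Pm q u u)"
    unfolding rho_def Hminus1_norm_def using ex hpos
    by (simp add: f_def[symmetric] g'_def[symmetric] grad_eq[OF st] Bg' real_sqrt_mult)
  define su where "su = sqrt (Bf Pm q u u)"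
  define sd where "sd = sqrt (Bf Pm q (\<lambda>z. l z - u z) (\<lambda>z. l z - u z))"
  have su0: "su \<ge> 0" unfolding su_def using Bf_nonneg[OF st inv, of u] by simp
  have sd0: "sd \<ge> 0" unfolding sd_def using Bf_nonneg[OF st inv, of "(\<lambda>z. l z - u z)"] by simp
  have "(variance_fun q c - variance_fun q p) / rho Pm q c p \<le> - 2 * su + 2 * sd + 2 * h * su"
  proof (cases "su = 0")
    case True
    then show ?thesis using rho sd0 su_def by simp
  next
    case False
    then have supos: "su > 0" using su0 by simp
    have "variance_fun q c - variance_fun q p = 2 * ipq q l f + ipq q f f"
      using var_diff[OF qpos] unfolding f_def l_def .
    also have "ipq q l f = - Bf Pm q l g" using Bf_ip[OF st inv bal, of l g] gf by simp
    also have "Bf Pm q l g = h * Bf Pm q l u" unfolding g_def by (simp add: Bf_scale2)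
    also have "Bf Pm q l u = Bf Pm q u u + Bf Pm q (\<lambda>z. l z - u z) u"
      by (simp add: Bf_diff1)
    finally have vd: "variance_fun q c - variance_fun q p = 2 * (- (h * (Bf Pm q u u + Bf Pm q (\<lambda>z. l z - u z) u))) + ipq q f f" .
    have "ipq q f f \<le> 2 * Bf Pm q g g" using gen_sq[OF st inv, of g] gf by simp
    also have "Bf Pm q g g = h\<^sup>2 * su\<^sup>2" unfolding g_def su_def
      using Bf_nonneg[OF st inv, of u] by (simp add: Bf_scale1 Bf_scale2 power2_eq_square)
    finally have ff: "ipq q f f \<le> 2 * h\<^sup>2 * su\<^sup>2" by simp
    have cs: "- Bf Pm q (\<lambda>z. l z - u z) u \<le> sd * su"
      using Bf_CS[OF st inv, of "(\<lambda>z. l z - u z)" u] unfolding sd_def su_def by simp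
    have uu: "Bf Pm q u u = su\<^sup>2" unfolding su_def using Bf_nonneg[OF st inv, of u] by simp
    have hX: "h * (- Bf Pm q (\<lambda>z. l z - u z) u) \<le> h * (sd * su)"
      using cs hpos by (intro mult_left_mono) auto
    have vd2: "variance_fun q c - variance_fun q p = -2 * (h * su\<^sup>2) + 2 * (h * (- Bf Pm q (\<lambda>z. l z - u z) u)) + ipq q f f"
      unfolding vd uu by (simp add: algebra_simps)
    have "variance_fun q c - variance_fun q p \<le> -2 * (h * su\<^sup>2) + 2 * (h * (sd * su)) + 2 * h\<^sup>2 * su\<^sup>2"
      unfolding vd2 using hX ff by linarith
    also have "\<dots> = (- 2 * su + 2 * sd + 2 * h * su) * (h * su)" by (simp add: power2_eq_square algebra_simps)
    finally show ?thesis using rho supos hpos su_def by (simp add: divide_le_eq)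
  qed
  then show ?thesis unfolding su_def sd_def l_def .
qed



primrec Kp :: "('a::finite \<Rightarrow> 'a \<Rightarrow> real) \<Rightarrow> nat \<Rightarrow> 'a \<Rightarrow> 'a \<Rightarrow> real" where
  "Kp Pm 0 = (\<lambda>z y. if z = y then 1 else 0)"
| "Kp Pm (Suc n) = (\<lambda>z y. \<Sum>w\<in>UNIV. kappa Pm z w * Kp Pm n w y)"

locale chain =
  fixes Pm :: "'a::finite \<Rightarrow> 'a \<Rightarrow> real"
    and q :: "'a \<Rightarrow> real"
    and P :: "real \<Rightarrow> 'a \<Rightarrow> real"
  assumes stoch: "stochastic_matrix Pm"
    and irred: "irreducible_matrix Pm"
    and inv: "invariant_distribution Pm q"
    and balance: "\<forall>y z. q y * kappa Pm y z = q z * kappa Pm z y"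
    and init_pos: "\<forall>y. P 0 y > 0"
    and init_sum: "(\<Sum>y\<in>UNIV. P 0 y) = 1"
    and kolmogorov: "\<forall>y t. t \<ge> 0 \<longrightarrow>
        ((\<lambda>s. P s y) has_real_derivative (\<Sum>z\<in>UNIV. P t z * kappa Pm z y)) (at t within {0..})"
begin

lemma qpos: "q y > 0"
proof (rule ccontr)
  have qn: "\<And>x. q x \<ge> 0" using inv by (simp add: invariant_distribution_def)
  assume "\<not> q y > 0"
  then have q0: "q y = 0" using qn[of y] by simp
  have "q x = 0" for x
  proof -
    have "(x, y) \<in> {(u, v). Pm u v > 0}\<^sup>*" using irred by (simp add: irreducible_matrix_def)
    then show ?thesis
    proof (induction rule: converse_rtrancl_induct)
      case base show ?case by (rule q0)
    next
      case (step a b)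
      from step have pab: "Pm a b > 0" and qb: "q b = 0" by auto
      have "q a * Pm a b \<le> (\<Sum>x\<in>UNIV. q x * Pm x b)"
        by (rule member_le_sum) (use qn stoch in \<open>auto simp: stochastic_matrix_def\<close>)
      also have "\<dots> = q b" using inv by (simp add: invariant_distribution_def)
      finally have "q a * Pm a b \<le> 0" using qb by simp
      moreover have "q a * Pm a b \<ge> 0" using qn[of a] pab by simp
      ultimately have "q a * Pm a b = 0" by simp
      then show ?case using pab by simp
    qed
  qed
  then have "(\<Sum>x\<in>UNIV. q x) = 0" by simp
  then show False using inv by (simp add: invariant_distribution_def)
qed

lemma deriv: "t \<ge> 0 \<Longrightarrow> ((\<lambda>s. P s y) has_real_derivative (\<Sum>z\<in>UNIV. P t z * kappa Pm z y)) (at t within {0..})"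
  using kolmogorov by blast

lemma cont: "continuous_on {0..} (\<lambda>s. P s y)"
  unfolding continuous_on_eq_continuous_within
  using deriv DERIV_continuous by fastforce

lemma kid: "P x y0 + (\<Sum>z\<in>UNIV. P x z * kappa Pm z y0) = (\<Sum>z\<in>UNIV. P x z * Pm z y0)"
proof -
  have "(\<Sum>z\<in>UNIV. P x z * kappa Pm z y0) = (\<Sum>z\<in>UNIV. P x z * Pm z y0) - (\<Sum>z\<in>UNIV. if z = y0 then P x z else 0)"
    unfolding kappa_def sum_subtractf[symmetric] by (intro sum.cong refl) (simp add: algebra_simps)
  then show ?thesis by simp
qed

lemma pos: assumes "t \<ge> 0" shows "P t y > 0"
proof (rule ccontr)
  assume nt: "\<not> P t y > 0"
  define A where "A = {s. s \<ge> 0 \<and> (\<exists>y. P s y \<le> 0)}"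
  have A_eq: "A = (\<Union>y\<in>UNIV. {0..} \<inter> (\<lambda>s. P s y) -` {..0})" by (auto simp: A_def)
  have clA: "closed A" unfolding A_eq
    by (intro closed_UN ballI continuous_closed_preimage[OF cont] closed_atLeast closed_atMost) simp
  have "t \<in> A" using nt assms by (auto simp: A_def not_less)
  then have neA: "A \<noteq> {}" by blast
  have bdd: "bdd_below A" unfolding A_def by (rule bdd_belowI[of _ 0]) auto
  define T where "T = Inf A"
  have TA: "T \<in> A" unfolding T_def by (rule closed_contains_Inf[OF neA bdd clA])
  then obtain y0 where T0: "T \<ge> 0" and PT: "P T y0 \<le> 0" by (auto simp: A_def)
  have "T \<noteq> 0" using PT init_pos by (metis not_le)
  with T0 have Tpos: "T > 0" by simp
  have below: "P s z > 0" if "0 \<le> s" "s < T" for s z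
  proof (rule ccontr)
    assume "\<not> P s z > 0"
    then have "s \<in> A" using that by (auto simp: A_def not_less)
    then have "T \<le> s" unfolding T_def by (rule cInf_lower[OF _ bdd])
    with that show False by simp
  qed
  define E where "E = (\<lambda>s. exp s * P s y0)"
  have "E 0 \<le> E T"
  proof (rule DERIV_nonneg_imp_increasing_open[of 0 T E])
    show "0 \<le> T" using T0 .
  next
    fix x assume x: "0 < x" "x < T"
    have d: "((\<lambda>s. P s y0) has_real_derivative (\<Sum>z\<in>UNIV. P x z * kappa Pm z y0)) (at x)"
    proof -
      have "x \<in> interior {0..}" using x by simp
      then have "at x within {0..} = at x" by (rule at_within_interior)
      then show ?thesis using deriv[of x y0] x by simp
    qed
    have "(E has_real_derivative exp x * P x y0 + exp x * (\<Sum>z\<in>UNIV. P x z * kappa Pm z y0)) (at x)"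
      unfolding E_def using DERIV_mult[OF DERIV_exp d] by (simp add: algebra_simps)
    moreover have "exp x * P x y0 + exp x * (\<Sum>z\<in>UNIV. P x z * kappa Pm z y0) \<ge> 0"
    proof -
      have "exp x * P x y0 + exp x * (\<Sum>z\<in>UNIV. P x z * kappa Pm z y0) = exp x * (\<Sum>z\<in>UNIV. P x z * Pm z y0)"
        by (simp only: distrib_left[symmetric] kid)
      also have "\<dots> \<ge> 0" using below[of x] x stoch
        by (intro mult_nonneg_nonneg sum_nonneg) (auto simp: stochastic_matrix_def less_imp_le)
      finally show ?thesis .
    qed
    ultimately show "\<exists>y. (E has_real_derivative y) (at x) \<and> 0 \<le> y" by blast
  next
    show "continuous_on {0..T} E" unfolding E_def
      by (intro continuous_intros continuous_on_subset[OF cont]) auto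
  qed
  then have "P 0 y0 \<le> exp T * P T y0" by (simp add: E_def)
  also have "\<dots> \<le> 0" using PT by (simp add: mult_nonneg_nonpos)
  finally show False using init_pos by (metis not_le)
qed

lemma sum1: assumes "t \<ge> 0" shows "(\<Sum>y\<in>UNIV. P t y) = 1"
proof -
  have "\<exists>c. \<forall>x\<in>{0..}. (\<Sum>y\<in>UNIV. P x y) = (c::real)"
  proof (rule has_field_derivative_zero_constant)
    fix x :: real assume x: "x \<in> {0..}"
    have "((\<lambda>s. \<Sum>y\<in>UNIV. P s y) has_real_derivative (\<Sum>y\<in>UNIV. \<Sum>z\<in>UNIV. P x z * kappa Pm z y)) (at x within {0..})"
      using x by (intro DERIV_sum deriv) simp
    moreover have "(\<Sum>y\<in>UNIV. \<Sum>z\<in>UNIV. P x z * kappa Pm z y) = 0"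
    proof -
      have "(\<Sum>y\<in>UNIV. \<Sum>z\<in>UNIV. P x z * kappa Pm z y) = (\<Sum>z\<in>UNIV. P x z * (\<Sum>y\<in>UNIV. kappa Pm z y))"
        by (subst sum.swap) (simp add: sum_distrib_left)
      then show ?thesis using row0[OF stoch] by simp
    qed
    ultimately show "((\<lambda>s. \<Sum>y\<in>UNIV. P s y) has_real_derivative 0) (at x within {0..})" by simp
  qed simp
  then obtain c where "\<forall>x\<in>{0..}. (\<Sum>y\<in>UNIV. P x y) = (c::real)" by blast
  then show ?thesis using assms init_sum by force
qed

lemma smooth: assumes "t0 \<ge> 0" shows "smooth_curve_M t0 P"
  unfolding smooth_curve_M_def
proof (intro conjI allI impI)
  fix t assume "t0 \<le> t"
  then show "in_M (P t)" using assms pos sum1 by (simp add: in_M_def)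
next
  fix y
  define D where "D = (\<lambda>n t. \<Sum>z\<in>UNIV. P t z * Kp Pm n z y)"
  have "D 0 = (\<lambda>t. P t y)" unfolding D_def by (simp add: if_distrib cong: if_cong)
  moreover have "(D n has_real_derivative D (Suc n) t) (at t within {t0..})" if "t \<ge> t0" for n t
  proof -
    have "(D n has_real_derivative (\<Sum>z\<in>UNIV. (\<Sum>w\<in>UNIV. P t w * kappa Pm w z) * Kp Pm n z y)) (at t within {0..})"
      unfolding D_def using that assms by (intro DERIV_sum DERIV_cmult_right deriv) simp
    moreover have "(\<Sum>z\<in>UNIV. (\<Sum>w\<in>UNIV. P t w * kappa Pm w z) * Kp Pm n z y) = D (Suc n) t"
      unfolding D_def by (simp add: sum_distrib_left sum_distrib_right mult.assoc) (rule sum.swap)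
    ultimately show ?thesis using assms by (auto intro: DERIV_subset)
  qed
  ultimately show "\<exists>D. D 0 = (\<lambda>t. P t y) \<and> (\<forall>n t. t0 \<le> t \<longrightarrow> (D n has_real_derivative D (Suc n) t) (at t within {t0..}))"
    by blast
qed


definition l :: "real \<Rightarrow> 'a \<Rightarrow> real" where "l s z = P s z / q z"

lemma lcont: "continuous_on {0..} (\<lambda>s. l s z)"
  unfolding l_def by (intro continuous_intros cont) (use qpos in \<open>auto simp: less_imp_neq[symmetric]\<close>)

lemma lderiv: assumes "t \<ge> 0"
  shows "((\<lambda>s. l s y) has_real_derivative gen Pm (l t) y) (at t within {0..})"
proof -
  have "((\<lambda>s. l s y) has_real_derivative (\<Sum>z\<in>UNIV. P t z * kappa Pm z y) / q y) (at t within {0..})"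
    unfolding l_def by (intro DERIV_cdivide deriv assms)
  moreover have "(\<Sum>z\<in>UNIV. P t z * kappa Pm z y) / q y = gen Pm (l t) y"
    unfolding gen_def l_def sum_divide_distrib
  proof (intro sum.cong refl)
    fix z
    have "q y * kappa Pm y z = q z * kappa Pm z y" using balance by blast
    then show "P t z * kappa Pm z y / q y = kappa Pm y z * (P t z / q z)"
      using qpos[of y] qpos[of z] by (simp add: field_simps)
  qed
  ultimately show ?thesis by simp
qed

lemma ftc: assumes "t0 \<ge> 0" "h \<ge> 0"
  shows "gen Pm (\<lambda>z. integral {t0..t0+h} (\<lambda>s. l s z)) = (\<lambda>y. l (t0+h) y - l t0 y)"
proof
  fix y
  have sub: "{t0..t0+h} \<subseteq> {0..}" using assms by auto
  have i1: "((\<lambda>s. gen Pm (l s) y) has_integral (l (t0+h) y - l t0 y)) {t0..t0+h}"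
  proof (rule fundamental_theorem_of_calculus)
    show "t0 \<le> t0 + h" using assms by simp
  next
    fix x assume "x \<in> {t0..t0+h}"
    then show "((\<lambda>s. l s y) has_vector_derivative gen Pm (l x) y) (at x within {t0..t0+h})"
      using lderiv[of x y] sub assms
      by (auto simp: has_real_derivative_iff_has_vector_derivative[symmetric] intro: DERIV_subset)
  qed
  have i2: "((\<lambda>s. gen Pm (l s) y) has_integral gen Pm (\<lambda>z. integral {t0..t0+h} (\<lambda>s. l s z)) y) {t0..t0+h}"
    unfolding gen_def
  proof (rule has_integral_sum)
    fix z
    have "(\<lambda>s. l s z) integrable_on {t0..t0+h}"
      by (rule integrable_continuous_interval, rule continuous_on_subset[OF lcont sub])
    then show "((\<lambda>s. kappa Pm y z * l s z) has_integral kappa Pm y z * integral {t0..t0+h} (\<lambda>s. l s z)) {t0..t0+h}"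
      by (intro has_integral_mult_right integrable_integral)
  qed simp
  show "gen Pm (\<lambda>z. integral {t0..t0+h} (\<lambda>s. l s z)) y = l (t0+h) y - l t0 y"
    using has_integral_unique[OF i2 i1] .
qed

lemma avg: assumes "t0 \<ge> 0"
  shows "((\<lambda>h. integral {t0..t0+h} (\<lambda>s. l s z) / h) \<longlongrightarrow> l t0 z) (at_right 0)"
proof -
  have c: "continuous_on {t0..t0+1} (\<lambda>s. l s z)"
    by (rule continuous_on_subset[OF lcont]) (use assms in auto)
  have "((\<lambda>u. integral {t0..u} (\<lambda>s. l s z)) has_real_derivative l t0 z) (at t0 within {t0..t0+1})"
    unfolding has_real_derivative_iff_has_vector_derivative
    by (rule integral_has_vector_derivative[OF c]) simp
  then have "((\<lambda>u. (integral {t0..u} (\<lambda>s. l s z) - integral {t0..t0} (\<lambda>s. l s z)) / (u - t0)) \<longlongrightarrow> l t0 z) (at_right t0)"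
    unfolding has_field_derivative_iff at_within_Icc_at_right[of t0 "t0+1", simplified] .
  then have "((\<lambda>u. integral {t0..u} (\<lambda>s. l s z) / (u - t0)) \<longlongrightarrow> l t0 z) (at_right t0)"
    by simp
  then have "((\<lambda>h. integral {t0..h + t0} (\<lambda>s. l s z) / (h + t0 - t0)) \<longlongrightarrow> l t0 z) (at_right 0)"
    unfolding at_right_to_0[of t0] filterlim_filtermap .
  then show ?thesis by (simp add: add.commute)
qed


lemma main: assumes t0: "t0 > 0"
  shows "steepest_descent_at (variance_fun q) (rho Pm q) P t0"
proof -
  define L where "L = - 2 * sqrt (Bf Pm q (\<lambda>y. P t0 y / q y) (\<lambda>y. P t0 y / q y))"
  have lower: "L \<le> descent_ratio (variance_fun q) (rho Pm q) P C t0 h" for C h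
    unfolding descent_ratio_def L_def
    by (rule ratio_lower[OF stoch inv balance qpos])
  define u where "u = (\<lambda>h z. integral {t0..t0+h} (\<lambda>s. l s z) / h)"
  define U where "U = (\<lambda>h. - 2 * sqrt (Bf Pm q (u h) (u h))
     + 2 * sqrt (Bf Pm q (\<lambda>z. P t0 z / q z - u h z) (\<lambda>z. P t0 z / q z - u h z))
     + 2 * h * sqrt (Bf Pm q (u h) (u h)))"
  have upper: "\<forall>\<^sub>F h in at_right 0. descent_ratio (variance_fun q) (rho Pm q) P P t0 h \<le> U h"
  proof (rule eventually_mono[OF eventually_at_right_less])
    fix h :: real assume h: "0 < h"
    have "gen Pm (\<lambda>z. h * u h z) = gen Pm (\<lambda>z. integral {t0..t0+h} (\<lambda>s. l s z))"
      unfolding u_def using h by simp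
    also have "\<dots> = (\<lambda>y. P (t0 + h) y / q y - P t0 y / q y)"
      using ftc[of t0 h] t0 h by (simp add: l_def)
    finally have gu: "gen Pm (\<lambda>z. h * u h z) = (\<lambda>y. P (t0 + h) y / q y - P t0 y / q y)" .
    show "descent_ratio (variance_fun q) (rho Pm q) P P t0 h \<le> U h"
      unfolding descent_ratio_def U_def
      by (rule ratio_upper[OF stoch inv balance qpos h gu])
  qed
  have ulim: "((\<lambda>h. u h z) \<longlongrightarrow> l t0 z) (at_right 0)" for z
    unfolding u_def using avg t0 by simp
  have B1: "((\<lambda>h. Bf Pm q (u h) (u h)) \<longlongrightarrow> Bf Pm q (l t0) (l t0)) (at_right 0)"
    unfolding Bf_def by (intro tendsto_intros ulim)
  have B2: "((\<lambda>h. Bf Pm q (\<lambda>z. P t0 z / q z - u h z) (\<lambda>z. P t0 z / q z - u h z))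
      \<longlongrightarrow> Bf Pm q (\<lambda>z. P t0 z / q z - l t0 z) (\<lambda>z. P t0 z / q z - l t0 z)) (at_right 0)"
    unfolding Bf_def by (intro tendsto_intros ulim)
  have l0: "l t0 = (\<lambda>y. P t0 y / q y)" by (simp add: l_def fun_eq_iff)
  have B0: "Bf Pm q (\<lambda>z. P t0 z / q z - l t0 z) (\<lambda>z. P t0 z / q z - l t0 z) = 0"
    by (simp add: l_def Bf_def)
  have "(U \<longlongrightarrow> - 2 * sqrt (Bf Pm q (l t0) (l t0)) + 2 * sqrt 0 + 2 * 0 * sqrt (Bf Pm q (l t0) (l t0))) (at_right 0)"
    unfolding U_def using B2 unfolding B0 by (intro tendsto_intros B1)
  then have Ulim: "(U \<longlongrightarrow> L) (at_right 0)" unfolding L_def l0 by simp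
  have lim: "(descent_ratio (variance_fun q) (rho Pm q) P P t0 \<longlongrightarrow> L) (at_right 0)"
    by (rule tendsto_sandwich[OF _ upper tendsto_const Ulim]) (simp add: lower)
  show ?thesis
    unfolding steepest_descent_at_def
  proof (intro conjI exI[of _ L] allI impI)
    show "smooth_curve_M t0 P" using smooth t0 by simp
    show "(descent_ratio (variance_fun q) (rho Pm q) P P t0 \<longlongrightarrow> L) (at_right 0)" by (rule lim)
    fix C L'
    assume "(descent_ratio (variance_fun q) (rho Pm q) P C t0 \<longlongrightarrow> L') (at_right 0)"
    then show "L \<le> L'"
      by (rule tendsto_le[OF trivial_limit_at_right_real _ tendsto_const]) (simp add: lower)
  qed
qed

end

theorem theorem6p3:
  fixes Pm :: "'a::finite \<Rightarrow> 'a \<Rightarrow> real"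
    and q :: "'a \<Rightarrow> real"
    and P :: "real \<Rightarrow> 'a \<Rightarrow> real"
  assumes stoch: "stochastic_matrix Pm"
    and irred: "irreducible_matrix Pm"
    and inv: "invariant_distribution Pm q"
    and balance: "\<forall>y z. q y * kappa Pm y z = q z * kappa Pm z y"
    and init_pos: "\<forall>y. P 0 y > 0"
    and init_sum: "(\<Sum>y\<in>UNIV. P 0 y) = 1"
    and kolmogorov: "\<forall>y t. t \<ge> 0 \<longrightarrow>
        ((\<lambda>s. P s y) has_real_derivative (\<Sum>z\<in>UNIV. P t z * kappa Pm z y)) (at t within {0..})"
  shows "\<forall>t0 > 0. steepest_descent_at (variance_fun q) (rho Pm q) P t0"
  using chain.main[OF chain.intro[OF stoch irred inv balance init_pos init_sum kolmogorov]] by blast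

end
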